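(* Let $V$ be a nonzero finite-dimensional complex vector space with a norm $\lVert\cdot\rVert$. Let $x,y\in\mathrm U(V)$ be such that the subgroup of $\mathrm{GL}(V)$ generated by $x$ and $y$ is finite, and suppose $\lVert \mathrm{id}_V-x\rVert_{\mathrm{op}}<1/2$ and $\lVert \mathrm{id}_V-y\rVert_{\mathrm{op}}<1/2$. Then $xy=yx$.
   Context: $\mathrm U(V)$ denotes the group of linear isometries of $V$, i.e. the set of $x\in\mathrm{GL}(V)$ with $\lVert xv\rVert=\lVert v\rVert$ for all $v\in V$. For $a\in\mathrm{End}(V)$, the operator norm is $\lVert a\rVert_{\mathrm{op}}=\max\{\lVert av\rVert : v\in V,\ \lVert v\rVert=1\}$. *)

theory Defs
  imports "HOL-Analysis.Analysis"
begin

text \<open>V is modelled as complex^'n (any finite index type; nonzero since types are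
nonempty), equipped with an arbitrary norm N. Endomorphisms are n x n complex matrices.\<close>

definition is_norm :: "(complex ^ 'n \<Rightarrow> real) \<Rightarrow> bool" where
  "is_norm N \<longleftrightarrow>
     (\<forall>v. 0 \<le> N v) \<and> (\<forall>v. N v = 0 \<longleftrightarrow> v = 0) \<and>
     (\<forall>c v. N (c *s v) = cmod c * N v) \<and>
     (\<forall>v w. N (v + w) \<le> N v + N w)"

definition unitary_group :: "(complex ^ 'n \<Rightarrow> real) \<Rightarrow> (complex ^ 'n ^ 'n) set" where
  "unitary_group N = {x. invertible x \<and> (\<forall>v. N (x *v v) = N v)}"

definition op_norm :: "(complex ^ 'n \<Rightarrow> real) \<Rightarrow> complex ^ 'n ^ 'n \<Rightarrow> real" where
  "op_norm N a = Sup ((\<lambda>v. N (a *v v)) ` {v. N v = 1})"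

inductive_set gen_subgroup :: "complex ^ 'n ^ 'n \<Rightarrow> complex ^ 'n ^ 'n \<Rightarrow> (complex ^ 'n ^ 'n) set"
  for x y where
  one: "mat 1 \<in> gen_subgroup x y"
| mx: "g \<in> gen_subgroup x y \<Longrightarrow> x ** g \<in> gen_subgroup x y"
| my: "g \<in> gen_subgroup x y \<Longrightarrow> y ** g \<in> gen_subgroup x y"
| mxi: "g \<in> gen_subgroup x y \<Longrightarrow> matrix_inv x ** g \<in> gen_subgroup x y"
| myi: "g \<in> gen_subgroup x y \<Longrightarrow> matrix_inv y ** g \<in> gen_subgroup x y"

end

theory Submission
  imports Defs
begin

lemma minv:
  fixes A :: "complex^'n^'n"
  assumes "invertible A"
  shows "A ** matrix_inv A = mat 1" "matrix_inv A ** A = mat 1"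
proof -
  have "\<exists>A'. A ** A' = mat 1 \<and> A' ** A = mat 1" using assms unfolding invertible_def by blast
  then have "A ** matrix_inv A = mat 1 \<and> matrix_inv A ** A = mat 1"
    unfolding matrix_inv_def by (rule someI_ex)
  then show "A ** matrix_inv A = mat 1" "matrix_inv A ** A = mat 1" by auto
qed

lemma minv_unique:
  fixes A B :: "complex^'n^'n"
  assumes "A ** B = mat 1" "B ** A = mat 1"
  shows "matrix_inv A = B"
proof -
  have i: "invertible A" using assms unfolding invertible_def by blast
  have "matrix_inv A = matrix_inv A ** (A ** B)" using assms by simp
  also have "\<dots> = B" using minv(2)[OF i] by (simp add: matrix_mul_assoc)
  finally show ?thesis .
qed

fun mpow :: "complex^'n^'n \<Rightarrow> nat \<Rightarrow> complex^'n^'n" where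
  "mpow c 0 = mat 1"
| "mpow c (Suc n) = c ** mpow c n"

lemma mpow_Suc': "mpow c (Suc n) = mpow c n ** c"
  by (induction n) (simp_all add: matrix_mul_assoc)

definition close :: "(complex ^ 'n \<Rightarrow> real) \<Rightarrow> real \<Rightarrow> complex^'n^'n \<Rightarrow> bool" where
  "close N r g \<longleftrightarrow> (\<forall>v. N (v - g *v v) \<le> r * N v)"

locale nrm =
  fixes N :: "complex ^ 'n \<Rightarrow> real"
  assumes isn: "is_norm N"
begin

lemma N_nonneg: "0 \<le> N v" using isn unfolding is_norm_def by blast
lemma N_zero_iff: "N v = 0 \<longleftrightarrow> v = 0" using isn unfolding is_norm_def by blast
lemma N0[simp]: "N 0 = 0" using N_zero_iff by blast
lemma N_scale: "N (c *s v) = cmod c * N v" using isn unfolding is_norm_def by blast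
lemma N_tri: "N (v + w) \<le> N v + N w" using isn unfolding is_norm_def by blast
lemma N_neg: "N (- v) = N v"
  using N_scale[of "-1" v] by (simp add: vector_smult_lneg)
lemma N_diff: "N (v - w) \<le> N v + N w"
  using N_tri[of v "-w"] N_neg[of w] by simp
lemma N_sum: "finite A \<Longrightarrow> N (sum f A) \<le> (\<Sum>i\<in>A. N (f i))"
proof (induction A rule: finite_induct)
  case empty then show ?case by simp
next
  case (insert a A)
  then show ?case using N_tri[of "f a" "sum f A"] by simp
qed

lemma close_mono: "close N r g \<Longrightarrow> r \<le> r' \<Longrightarrow> close N r' g"
  unfolding close_def by (meson N_nonneg dual_order.trans mult_right_mono)

lemma eq_one: 
  assumes "\<And>v. N (v - g *v v) \<le> 0" shows "g = mat 1"
proof -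
  have "g *v v = mat 1 *v v" for v
    using assms[of v] N_nonneg[of "v - g *v v"] N_zero_iff[of "v - g *v v"] by simp
  then show ?thesis by (simp add: matrix_eq)
qed

lemma opnorm_close:
  assumes iso: "\<And>v. N (g *v v) = N v"
  shows "close N (max 0 (op_norm N (mat 1 - g))) g"
proof -
  let ?S = "(\<lambda>v. N ((mat 1 - g) *v v)) ` {v. N v = 1}"
  have bdd: "bdd_above ?S"
  proof (rule bdd_aboveI)
    fix t assume "t \<in> ?S"
    then obtain v where "N v = 1" "t = N ((mat 1 - g) *v v)" by auto
    then show "t \<le> 2" using N_diff[of v "g *v v"] iso[of v]
      by (simp add: matrix_vector_mult_diff_rdistrib)
  qed
  have "N (v - g *v v) \<le> op_norm N (mat 1 - g) * N v" for v
  proof (cases "v = 0")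
    case True then show ?thesis by simp
  next
    case False
    then have pos: "N v > 0" using N_nonneg N_zero_iff by (metis less_eq_real_def)
    define u where "u = complex_of_real (1 / N v) *s v"
    have Nu: "N u = 1" unfolding u_def N_scale using pos by (simp add: norm_divide)
    have "N ((mat 1 - g) *v u) \<le> op_norm N (mat 1 - g)"
      unfolding op_norm_def by (rule cSup_upper[OF _ bdd]) (use Nu in auto)
    moreover have "(mat 1 - g) *v u = complex_of_real (1 / N v) *s (v - g *v v)"
      unfolding u_def by (simp add: matrix_vector_mult_diff_rdistrib vector_scalar_commute
         vector_ssub_ldistrib)
    ultimately have "N (complex_of_real (1 / N v) *s (v - g *v v)) \<le> op_norm N (mat 1 - g)"
      by simp
    then have "(1 / N v) * N (v - g *v v) \<le> op_norm N (mat 1 - g)"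
      unfolding N_scale using pos by (simp add: norm_divide)
    then show ?thesis using pos by (simp add: field_simps)
  qed
  then show ?thesis unfolding close_def
    by (meson N_nonneg max.cobounded2 mult_right_mono order_trans)
qed


lemma N_scaleR: "N (t *\<^sub>R v) = \<bar>t\<bar> * N v"
proof -
  have "t *\<^sub>R v = complex_of_real t *s v" by (subst vec_eq_iff, intro allI) (simp only: vector_scaleR_component vector_smult_component, simp add: scaleR_conv_of_real)
  then show ?thesis by (simp add: N_scale)
qed

end

lemma mv_scaleR: "(A::complex^'n^'n) *v (t *\<^sub>R v) = t *\<^sub>R (A *v v)"
proof -
  have e: "t *\<^sub>R w = complex_of_real t *s w" for w :: "complex^'n"
    by (subst vec_eq_iff, intro allI) (simp only: vector_scaleR_component vector_smult_component, simp add: scaleR_conv_of_real)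
  show ?thesis unfolding e by (simp add: vector_scalar_commute)
qed

lemma sum_mv: "(\<Sum>k<(m::nat). A k) *v (v::complex^'n) = (\<Sum>k<m. (A k :: complex^'n^'n) *v v)"
  by (induction m) (simp_all add: matrix_vector_mult_add_rdistrib)

lemma mv_sum: "(A::complex^'n^'n) *v (\<Sum>k<(m::nat). f k) = (\<Sum>k<m. A *v f k)"
  by (induction m) (simp_all add: matrix_vector_right_distrib)

lemma mpow_mv_Suc: "mpow c (Suc n) *v v = c *v (mpow c n *v v)"
  by (simp add: matrix_vector_mul_assoc)

context nrm begin

lemma avg_lemma:
  assumes cl: "\<And>n. close N r (mpow c n)" and r1: "r < 1" and ij: "i < j"
    and eq: "mpow c i = mpow c j"
  shows "c = mat 1"
proof -
  define m where "m = j - i"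
  have m0: "m > 0" and jm: "j = i + m" using ij unfolding m_def by auto
  define Sm where "Sm = (\<Sum>k<m. mpow c (i+k))"
  have Sv: "Sm *v v = (\<Sum>k<m. mpow c (i+k) *v v)" for v
    unfolding Sm_def by (rule sum_mv)
  have cS: "c *v (Sm *v v) = Sm *v v" for v
  proof -
    define f where "f k = mpow c (i+k) *v v" for k
    have "c *v (Sm *v v) = (\<Sum>k<m. f (Suc k))"
      unfolding Sv mv_sum f_def by (simp add: matrix_vector_mul_assoc)
    also have "\<dots> = (\<Sum>k<m. f k)"
    proof -
      have "(\<Sum>k<Suc m. f k) = f 0 + (\<Sum>k<m. f (Suc k))" by (rule sum.lessThan_Suc_shift)
      moreover have "(\<Sum>k<Suc m. f k) = (\<Sum>k<m. f k) + f m" by simp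
      moreover have "f m = f 0" unfolding f_def using eq jm by simp
      ultimately show ?thesis by (simp add: add.commute)
    qed
    finally show ?thesis unfolding Sv f_def .
  qed
  have pS: "mpow c n *v (Sm *v v) = Sm *v v" for n v
    by (induction n) (simp_all add: matrix_vector_mul_assoc[symmetric] cS)
  have SS: "Sm *v (Sm *v v) = real m *\<^sub>R (Sm *v v)" for v
  proof -
    have "Sm *v (Sm *v v) = (\<Sum>k<m. Sm *v v)" using Sv[of "Sm *v v"] pS by simp
    also have "\<dots> = real m *\<^sub>R (Sm *v v)"
      using sum_constant_scaleR[of "Sm *v v" "{..<m}"] by simp
    finally show ?thesis .
  qed
  have dev: "N (real m *\<^sub>R u - Sm *v u) \<le> real m * r * N u" for u
  proof -
    have "real m *\<^sub>R u - Sm *v u = (\<Sum>k<m. u - mpow c (i+k) *v u)"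
      unfolding Sv by (simp add: sum_subtractf sum_constant_scaleR del: sum_constant)
    then have "N (real m *\<^sub>R u - Sm *v u) \<le> (\<Sum>k<m. N (u - mpow c (i+k) *v u))"
      using N_sum[of "{..<m}"] by simp
    also have "\<dots> \<le> (\<Sum>k<m. r * N u)"
      by (rule sum_mono) (use cl in \<open>auto simp: close_def\<close>)
    finally show ?thesis by simp
  qed
  have Sfix: "Sm *v v = real m *\<^sub>R v" for v
  proof -
    define w where "w = real m *\<^sub>R v - Sm *v v"
    have "Sm *v w = 0" unfolding w_def
      by (simp add: matrix_vector_mult_diff_distrib mv_scaleR SS)
    then have "N (real m *\<^sub>R w) \<le> real m * r * N w" using dev[of w] by simp
    then have "real m * N w \<le> real m * r * N w" by (simp add: N_scaleR)
    then have "real m * N w * (1 - r) \<le> 0" by (simp add: algebra_simps)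
    moreover have "real m * N w * (1 - r) \<ge> 0" using r1 N_nonneg by simp
    ultimately have "real m * N w * (1 - r) = 0" by linarith
    then have "N w = 0" using m0 r1 by simp
    then have "w = 0" using N_zero_iff by simp
    then show ?thesis unfolding w_def by simp
  qed
  have "c *v v = mat 1 *v v" for v
    using cS[of v] m0 unfolding Sfix mv_scaleR by simp
  then show ?thesis by (simp add: matrix_eq)
qed

end

locale grp = nrm +
  fixes x y :: "complex^'n^'n"
  assumes xU: "x \<in> unitary_group N" and yU: "y \<in> unitary_group N"
begin

abbreviation "G \<equiv> gen_subgroup x y"

lemma x_inv: "invertible x" and y_inv: "invertible y"
  and x_iso: "N (x *v v) = N v" and y_iso: "N (y *v v) = N v"
  using xU yU unfolding unitary_group_def by auto

lemma xi_iso: "N (matrix_inv x *v v) = N v"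
  using x_iso[of "matrix_inv x *v v"] minv(1)[OF x_inv] by (simp add: matrix_vector_mul_assoc)
lemma yi_iso: "N (matrix_inv y *v v) = N v"
  using y_iso[of "matrix_inv y *v v"] minv(1)[OF y_inv] by (simp add: matrix_vector_mul_assoc)

lemma G_mult: "g \<in> G \<Longrightarrow> h \<in> G \<Longrightarrow> g ** h \<in> G"
  by (induction g rule: gen_subgroup.induct)
     (auto simp: matrix_mul_assoc[symmetric] intro: gen_subgroup.intros)

lemma gens: "x \<in> G" "y \<in> G" "matrix_inv x \<in> G" "matrix_inv y \<in> G"
  using gen_subgroup.mx[OF gen_subgroup.one[where x=x and y=y]] gen_subgroup.my[OF gen_subgroup.one[where x=x and y=y]]
    gen_subgroup.mxi[OF gen_subgroup.one[where x=x and y=y]] gen_subgroup.myi[OF gen_subgroup.one[where x=x and y=y]]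
  by simp_all

lemma G_iso: "g \<in> G \<Longrightarrow> N (g *v v) = N v"
  by (induction g arbitrary: v rule: gen_subgroup.induct)
     (simp_all add: matrix_vector_mul_assoc[symmetric] x_iso y_iso xi_iso yi_iso)

lemma G_inv_ex: "g \<in> G \<Longrightarrow> \<exists>h\<in>G. g ** h = mat 1 \<and> h ** g = mat 1"
proof (induction g rule: gen_subgroup.induct)
  case one
  then show ?case using gen_subgroup.one by force
next
  case (mx g)
  then obtain h where h: "h \<in> G" "g ** h = mat 1" "h ** g = mat 1" by blast
  have "(x ** g) ** (h ** matrix_inv x) = mat 1"
    by (metis h(2) matrix_mul_assoc matrix_mul_rid minv(1)[OF x_inv])
  moreover have "(h ** matrix_inv x) ** (x ** g) = mat 1"
    by (metis h(3) matrix_mul_assoc matrix_mul_rid minv(2)[OF x_inv])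
  ultimately show ?case using G_mult[OF h(1) gens(3)] by blast
next
  case (my g)
  then obtain h where h: "h \<in> G" "g ** h = mat 1" "h ** g = mat 1" by blast
  have "(y ** g) ** (h ** matrix_inv y) = mat 1"
    by (metis h(2) matrix_mul_assoc matrix_mul_rid minv(1)[OF y_inv])
  moreover have "(h ** matrix_inv y) ** (y ** g) = mat 1"
    by (metis h(3) matrix_mul_assoc matrix_mul_rid minv(2)[OF y_inv])
  ultimately show ?case using G_mult[OF h(1) gens(4)] by blast
next
  case (mxi g)
  then obtain h where h: "h \<in> G" "g ** h = mat 1" "h ** g = mat 1" by blast
  have "(matrix_inv x ** g) ** (h ** x) = mat 1"
    by (metis h(2) matrix_mul_assoc matrix_mul_rid minv(2)[OF x_inv])
  moreover have "(h ** x) ** (matrix_inv x ** g) = mat 1"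
    by (metis h(3) matrix_mul_assoc matrix_mul_rid minv(1)[OF x_inv])
  ultimately show ?case using G_mult[OF h(1) gens(1)] by blast
next
  case (myi g)
  then obtain h where h: "h \<in> G" "g ** h = mat 1" "h ** g = mat 1" by blast
  have "(matrix_inv y ** g) ** (h ** y) = mat 1"
    by (metis h(2) matrix_mul_assoc matrix_mul_rid minv(2)[OF y_inv])
  moreover have "(h ** y) ** (matrix_inv y ** g) = mat 1"
    by (metis h(3) matrix_mul_assoc matrix_mul_rid minv(1)[OF y_inv])
  ultimately show ?case using G_mult[OF h(1) gens(2)] by blast
qed

lemma G_inv: assumes "g \<in> G"
  shows "matrix_inv g \<in> G" "g ** matrix_inv g = mat 1" "matrix_inv g ** g = mat 1"
proof -
  obtain h where h: "h \<in> G" "g ** h = mat 1" "h ** g = mat 1" using G_inv_ex[OF assms] by blast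
  have "matrix_inv g = h" using minv_unique[OF h(2,3)] .
  then show "matrix_inv g \<in> G" "g ** matrix_inv g = mat 1" "matrix_inv g ** g = mat 1"
    using h by auto
qed

lemma mpow_G: "g \<in> G \<Longrightarrow> mpow g n \<in> G"
  by (induction n) (auto intro: G_mult gen_subgroup.one)

lemma comm_close:
  assumes g: "g \<in> G" and z: "z \<in> G" and a: "close N a g" and b: "close N b z"
    and a0: "0 \<le> a" and b0: "0 \<le> b"
  shows "close N (2*a*b) (g ** z ** matrix_inv g ** matrix_inv z)"
  unfolding close_def
proof
  fix v
  define u where "u = matrix_inv g *v (matrix_inv z *v v)"
  have Nu: "N u = N v" unfolding u_def using G_iso G_inv g z by simp
  have "z ** (g ** (matrix_inv g ** matrix_inv z)) = mat 1"
    using G_inv(2)[OF g] G_inv(2)[OF z] by (metis matrix_mul_assoc matrix_mul_lid)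
  then have v: "v = z *v (g *v u)" unfolding u_def
    by (simp add: matrix_vector_mul_assoc)
  have cv: "(g ** z ** matrix_inv g ** matrix_inv z) *v v = g *v (z *v u)"
    unfolding u_def by (simp add: matrix_vector_mul_assoc matrix_mul_assoc)
  define p where "p = u - g *v u"
  define q where "q = u - z *v u"
  have e: "v - (g ** z ** matrix_inv g ** matrix_inv z) *v v = (p - z *v p) - (q - g *v q)"
    unfolding cv p_def q_def by (subst v) (simp add: matrix_vector_mult_diff_distrib algebra_simps)
  have "N (v - (g ** z ** matrix_inv g ** matrix_inv z) *v v) \<le> N (p - z *v p) + N (q - g *v q)"
    unfolding e by (rule N_diff)
  also have "\<dots> \<le> b * N p + a * N q" using a b unfolding close_def by (meson add_mono)
  also have "\<dots> \<le> b * (a * N u) + a * (b * N u)"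
    using a b b0 a0 unfolding close_def p_def q_def by (meson add_mono mult_left_mono)
  finally show "N (v - (g ** z ** matrix_inv g ** matrix_inv z) *v v) \<le> 2 * a * b * N v"
    using Nu by (simp add: algebra_simps)
qed


lemma mpow_inv: assumes "g ** h = mat 1" shows "mpow g n ** mpow h n = mat 1"
proof (induction n)
  case 0 then show ?case by simp
next
  case (Suc n)
  have "mpow g (Suc n) ** mpow h (Suc n) = g ** (mpow g n ** mpow h n) ** h"
    by (simp only: mpow.simps(2)[of g] mpow_Suc'[of h] matrix_mul_assoc)
  then show ?case using Suc assms by simp
qed

lemma mpow_comm: assumes "g ** c = c ** g" shows "g ** mpow c n = mpow c n ** g"
proof (induction n)
  case 0 then show ?case by simp
next
  case (Suc n)
  then show ?case using assms by (metis matrix_mul_assoc mpow.simps(2) mpow_Suc')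
qed

lemma back_step:
  assumes fin: "finite G" and z: "z \<in> G" and b: "close N b z" and b0: "0 \<le> b" and b1: "b < 1/2"
    and cm: "x ** (x ** z ** matrix_inv x ** matrix_inv z) = (x ** z ** matrix_inv x ** matrix_inv z) ** x"
  shows "x ** z = z ** x"
proof -
  define xi where "xi = matrix_inv x"
  define zi where "zi = matrix_inv z"
  define c where "c = x ** z ** xi ** zi"
  have xxi: "x ** xi = mat 1" "xi ** x = mat 1" unfolding xi_def using minv x_inv by auto
  have zzi: "z ** zi = mat 1" "zi ** z = mat 1" unfolding zi_def using G_inv z by auto
  have cG: "c \<in> G" unfolding c_def xi_def zi_def using G_mult gens G_inv z by simp
  have xc: "x ** c = c ** x" using cm unfolding c_def xi_def zi_def .
  have xzxi: "x ** z ** xi = c ** z" unfolding c_def using zzi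
    by (metis matrix_mul_assoc matrix_mul_rid)
  have pf: "mpow c n ** z = mpow x n ** z ** mpow xi n" for n
  proof (induction n)
    case 0 then show ?case by simp
  next
    case (Suc n)
    have "mpow x (Suc n) ** z ** mpow xi (Suc n) = x ** (mpow x n ** z ** mpow xi n) ** xi"
      by (simp only: mpow.simps(2)[of x] mpow_Suc'[of xi] matrix_mul_assoc)
    also have "\<dots> = x ** (mpow c n ** z) ** xi" using Suc by simp
    also have "\<dots> = x ** mpow c n ** z ** xi" by (simp add: matrix_mul_assoc)
    also have "\<dots> = mpow c n ** (x ** z ** xi)"
      using mpow_comm[OF xc, of n] by (simp add: matrix_mul_assoc)
    also have "\<dots> = mpow c (Suc n) ** z" unfolding xzxi by (simp only: mpow_Suc' matrix_mul_assoc)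
    finally show ?case by simp
  qed
  have pf2: "mpow c n = mpow x n ** z ** mpow xi n ** zi" for n
    using pf[of n] zzi by (metis matrix_mul_assoc matrix_mul_rid)
  have xG: "mpow x n \<in> G" "mpow xi n \<in> G" for n unfolding xi_def using mpow_G gens by auto
  have clc: "close N (2*b) (mpow c n)" for n
    unfolding close_def
  proof
    fix v
    define u where "u = zi *v v"
    define w where "w = mpow xi n *v u"
    have v: "v = z *v u" unfolding u_def using zzi by (simp add: matrix_vector_mul_assoc)
    have uw: "u = mpow x n *v w" unfolding w_def using mpow_inv[OF xxi(1)]
      by (simp add: matrix_vector_mul_assoc)
    have cv: "mpow c n *v v = mpow x n *v (z *v w)"
      unfolding pf2 u_def w_def by (simp add: matrix_vector_mul_assoc matrix_mul_assoc)
    have e: "v - mpow c n *v v = mpow x n *v (w - z *v w) - (u - z *v u)"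
    proof -
      have "mpow x n *v (w - z *v w) - (u - z *v u) = z *v u - mpow x n *v (z *v w)"
        by (simp add: matrix_vector_mult_diff_distrib flip: uw)
      then show ?thesis unfolding cv using v by simp
    qed
    have Nu: "N u = N v" unfolding u_def zi_def using G_iso G_inv z by simp
    have Nw: "N w = N u" unfolding w_def using G_iso xG by simp
    have "N (v - mpow c n *v v) \<le> N (mpow x n *v (w - z *v w)) + N (u - z *v u)"
      unfolding e by (rule N_diff)
    also have "\<dots> \<le> b * N w + b * N u" using b xG G_iso unfolding close_def by (simp add: add_mono)
    finally show "N (v - mpow c n *v v) \<le> 2 * b * N v" using Nu Nw by simp
  qed
  have "\<not> inj (mpow c)"
  proof
    assume "inj (mpow c)"
    moreover have "range (mpow c) \<subseteq> G" using mpow_G cG by auto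
    ultimately have "finite (UNIV :: nat set)" using fin by (meson finite_imageD finite_subset)
    then show False by simp
  qed
  then obtain i j where "i \<noteq> j" "mpow c i = mpow c j" unfolding inj_def by blast
  then obtain i j where ij: "i < j" "mpow c i = mpow c j" by (metis linorder_neqE_nat)
  have "c = mat 1" by (rule avg_lemma[OF clc _ ij]) (use b1 in simp)
  then have "x ** z ** xi ** zi ** (z ** x) = z ** x" unfolding c_def by simp
  then show ?thesis using xxi zzi by (metis matrix_mul_assoc matrix_mul_rid)
qed


lemma main:
  assumes fin: "finite G" and ax: "close N a x" and yb: "close N b y"
    and a0: "0 \<le> a" and a1: "a < 1/2" and b0: "0 \<le> b" and b1: "b < 1/2"
  shows "x ** y = y ** x"
proof -
  define zs where "zs = rec_nat y (\<lambda>_ z. x ** z ** matrix_inv x ** matrix_inv z)"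
  have zs0: "zs 0 = y" and zsS: "zs (Suc k) = x ** zs k ** matrix_inv x ** matrix_inv (zs k)" for k
    unfolding zs_def by simp_all
  have zG: "zs k \<in> G" for k
    by (induction k) (simp_all add: zs0 zsS gens G_mult G_inv)
  define r where "r k = b * (2*a)^k" for k
  have r0: "0 \<le> r k" for k unfolding r_def using a0 b0 by simp
  have rb: "r k \<le> b" for k
  proof -
    have "(2*a)^k \<le> 1" using a0 a1 by (intro power_le_one) auto
    then show ?thesis unfolding r_def using b0 by (metis mult_left_le)
  qed
  have rmono: "k \<le> k' \<Longrightarrow> r k' \<le> r k" for k k'
  proof -
    assume kk: "k \<le> k'"
    have "(2*a)^k' \<le> (2*a)^k" using a0 a1 kk by (intro power_decreasing) auto
    then show ?thesis unfolding r_def using b0 by (metis mult_left_mono)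
  qed
  have zcl: "close N (r k) (zs k)" for k
  proof (induction k)
    case 0 then show ?case using yb unfolding r_def zs0 by simp
  next
    case (Suc k)
    have "close N (2*a*r k) (zs (Suc k))" unfolding zsS
      by (rule comm_close[OF gens(1) zG ax Suc a0 r0])
    moreover have "2*a*r k = r (Suc k)" unfolding r_def by simp
    ultimately show ?case by simp
  qed
  have "finite (range zs)" using zG fin by (meson finite_subset image_subsetI)
  then obtain g where g: "infinite (zs -` {g})" using inf_img_fin_domE[of zs UNIV] by auto
  have "g = mat 1"
  proof (rule eq_one)
    fix v
    have p0: "(\<lambda>k. (2*a)^k) \<longlonglongrightarrow> 0" by (rule LIMSEQ_power_zero) (use a0 a1 in simp)
    have lim: "(\<lambda>k. r k * N v) \<longlonglongrightarrow> 0" unfolding r_def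
      using tendsto_mult[OF tendsto_mult[OF tendsto_const[of b] p0] tendsto_const[of "N v"]] by simp
    have "\<forall>K\<ge>0. N (v - g *v v) \<le> r K * N v"
    proof (intro allI impI)
      fix K :: nat
      obtain k where k: "k \<ge> K" "zs k = g" using g unfolding infinite_nat_iff_unbounded_le by auto
      have "N (v - g *v v) \<le> r k * N v" using zcl[of k] k unfolding close_def by simp
      also have "\<dots> \<le> r K * N v" using rmono[OF k(1)] N_nonneg by (simp add: mult_right_mono)
      finally show "N (v - g *v v) \<le> r K * N v" .
    qed
    then show "N (v - g *v v) \<le> 0" using LIMSEQ_le_const[OF lim] by blast
  qed
  then obtain k where k: "zs k = mat 1" using g by (metis finite.emptyI vimage_singleton_eq empty_iff ex_in_conv)
  have "x ** zs j = zs j ** x" if "j \<le> k" for j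
    using that
  proof (induction j rule: inc_induct)
    case base then show ?case using k by simp
  next
    case (step j)
    have "x ** zs j = zs j ** x"
      by (rule back_step[OF fin zG zcl r0 _ step.IH[unfolded zsS]]) (use rb b1 in \<open>meson le_less_trans\<close>)
    then show ?case .
  qed
  then show ?thesis using zs0 by (metis le0)
qed

end
theorem mainTheorem5:
  fixes N :: "complex ^ 'n \<Rightarrow> real" and x y :: "complex ^ 'n ^ 'n"
  assumes "is_norm N"
    and "x \<in> unitary_group N" and "y \<in> unitary_group N"
    and "finite (gen_subgroup x y)"
    and "op_norm N (mat 1 - x) < 1/2" and "op_norm N (mat 1 - y) < 1/2"
  shows "x ** y = y ** x"
proof -
  interpret grp N x y using assms(1-3) by (unfold_locales)
  show ?thesis
  proof (rule main[OF assms(4) opnorm_close opnorm_close])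
    show "N (x *v v) = N v" for v by (rule x_iso)
    show "N (y *v v) = N v" for v by (rule y_iso)
  qed (use assms(5,6) in auto)
qed

end
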